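(* Let $\mathcal{A}=\{a,b,c,\overline{a},\overline{b},\overline{c}\}$ and let $\varphi$ be the morphism of $\mathcal{A}^*$ defined by $$\varphi(a)=a\overline{c},\ \varphi(b)=c\overline{b},\ \varphi(c)=b\overline{a},\ \varphi(\overline{a})=ac,\ \varphi(\overline{b})=cb,\ \varphi(\overline{c})=ba,$$ and let $\mathcal{S}_\infty$ be its iterative fixed point beginning with $a$ (the classical Hanoi sequence, $\mathcal{S}_\infty = a\,\overline{c}\,b\,a\,c\,\overline{b}\,a\,\overline{c}\,b\,\overline{a}\,c\,b\cdots$). Let $\xi$ be the (non-uniform) morphism of $\mathcal{A}^*$ defined by $$\xi(a)=a\overline{c}b,\ \xi(b)=\overline{b},\ \xi(c)=\overline{a}c,\ \xi(\overline{a})=acb,\ \xi(\overline{b})=b,\ \xi(\overline{c})=ac.$$ Then $\mathcal{S}_\infty$ is the iterative fixed point of $\xi$ beginning with $a$; in particular the classical Hanoi sequence is non-uniformly pure morphic. Similarly, let $\mathcal{B}=\{a,b,\overline{a},\overline{b}\}$, let $\lambda$ be the morphism of $\mathcal{B}^*$ defined by $$\lambda(a)=aba,\ \lambda(\overline{a})=ab\overline{a},\ \lambda(b)=\overline{b}\,\overline{a}\,b,\ \lambda(\overline{b})=\overline{b}\,\overline{a}\,\overline{b},$$ and let $\mathcal{H}_\infty$ be its iterative fixed point beginning with $a$ (the lazy Hanoi sequence). Let $\eta$ be the (non-uniform) morphism of $\mathcal{B}^*$ defined by $$\eta(a)=aba\overline{b},\ \eta(b)=\overline{a}b,\ \eta(\overline{a})=ab\overline{a}\,\overline{b},\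 \eta(\overline{b})=\overline{a}\,\overline{b}.$$ Then $\mathcal{H}_\infty$ is the iterative fixed point of $\eta$ beginning with $a$; in particular the lazy Hanoi sequence is non-uniformly pure morphic.
   Context: For a finite alphabet $\mathcal{A}$, $\mathcal{A}^*$ is the free monoid of finite words under concatenation; a morphism $\sigma$ of $\mathcal{A}^*$ satisfies $\sigma(uv)=\sigma(u)\sigma(v)$ and is extended to infinite sequences letterwise. A morphism is $k$-uniform if all images of letters have length $k$; it is non-uniform otherwise. If $\sigma(a_0)=a_0x$ with $\sigma^\ell(x)$ nonempty for all $\ell$, then the words $\sigma^\ell(a_0)$ converge (have longer and longer common prefixes) to an infinite sequence, called the iterative fixed point of $\sigma$ beginning with $a_0$. A sequence is non-uniformly pure morphic if it is the iterative fixed point of a non-uniform morphism. (The letters $a,b,c$ denote the Tower of Hanoi moves peg I→II, II→III, III→I and the barred letters their inverses; $\mathcal{S}_\infty$ is the infinite sequence of moves of the optimal recursive solution, and $\mathcal{H}_\infty$ that of the lazy Tower of Hanoi using only moves $a,\overline a,b,\overline b$.) *)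

theory Defs
  imports Main
begin

definition morph :: "('a \<Rightarrow> 'a list) \<Rightarrow> 'a list \<Rightarrow> 'a list" where
  "morph \<sigma> w = concat (map \<sigma> w)"

definition uniform :: "('a \<Rightarrow> 'a list) \<Rightarrow> nat \<Rightarrow> bool" where
  "uniform \<sigma> k \<longleftrightarrow> (\<forall>x. length (\<sigma> x) = k)"

definition non_uniform :: "('a \<Rightarrow> 'a list) \<Rightarrow> bool" where
  "non_uniform \<sigma> \<longleftrightarrow> \<not> (\<exists>k. uniform \<sigma> k)"

definition iter_fixpoint :: "('a \<Rightarrow> 'a list) \<Rightarrow> 'a \<Rightarrow> (nat \<Rightarrow> 'a) \<Rightarrow> bool" where
  "iter_fixpoint \<sigma> a0 s \<longleftrightarrow>
     (\<exists>x. \<sigma> a0 = a0 # x \<and> (\<forall>l. (morph \<sigma> ^^ l) x \<noteq> [])) \<and>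
     (\<forall>n. \<exists>L. \<forall>l\<ge>L. n < length ((morph \<sigma> ^^ l) [a0]) \<and> (morph \<sigma> ^^ l) [a0] ! n = s n)"

definition nonuniformly_pure_morphic :: "(nat \<Rightarrow> 'a) \<Rightarrow> bool" where
  "nonuniformly_pure_morphic s \<longleftrightarrow>
     (\<exists>\<sigma> a0. non_uniform \<sigma> \<and> iter_fixpoint \<sigma> a0 s)"

datatype hl = A | B | C | Abar | Bbar | Cbar

fun phi :: "hl \<Rightarrow> hl list" where
  "phi A = [A, Cbar]" | "phi B = [C, Bbar]" | "phi C = [B, Abar]"
| "phi Abar = [A, C]" | "phi Bbar = [C, B]" | "phi Cbar = [B, A]"

fun xi :: "hl \<Rightarrow> hl list" where
  "xi A = [A, Cbar, B]" | "xi B = [Bbar]" | "xi C = [Abar, C]"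
| "xi Abar = [A, C, B]" | "xi Bbar = [B]" | "xi Cbar = [A, C]"

datatype ll = LA | LB | LAbar | LBbar

fun lam :: "ll \<Rightarrow> ll list" where
  "lam LA = [LA, LB, LA]" | "lam LAbar = [LA, LB, LAbar]"
| "lam LB = [LBbar, LAbar, LB]" | "lam LBbar = [LBbar, LAbar, LBbar]"

fun eta :: "ll \<Rightarrow> ll list" where
  "eta LA = [LA, LB, LA, LBbar]" | "eta LB = [LAbar, LB]"
| "eta LAbar = [LA, LB, LAbar, LBbar]" | "eta LBbar = [LAbar, LBbar]"

end

theory Submission
  imports Defs
begin


definition pre :: "'a list \<Rightarrow> 'a list \<Rightarrow> bool" where
  "pre a b \<longleftrightarrow> (\<exists>c. b = a @ c)"

lemma pre_trans: "pre a b \<Longrightarrow> pre b c \<Longrightarrow> pre a c"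
  unfolding pre_def by auto

lemma pre_nth: "pre a b \<Longrightarrow> n < length a \<Longrightarrow> b ! n = a ! n"
  unfolding pre_def by (auto simp: nth_append)

lemma pre_len: "pre a b \<Longrightarrow> length a \<le> length b"
  unfolding pre_def by auto

lemma morph_Nil[simp]: "morph f [] = []" by (simp add: morph_def)
lemma morph_Cons[simp]: "morph f (x # w) = f x @ morph f w" by (simp add: morph_def)
lemma morph_append[simp]: "morph f (v @ w) = morph f v @ morph f w" by (simp add: morph_def)

lemma pre_morph: "pre a b \<Longrightarrow> pre (morph f a) (morph f b)"
  unfolding pre_def by auto

lemma pre_append_short: "pre a (b @ c) \<Longrightarrow> length a \<le> length b \<Longrightarrow> pre a b"
  unfolding pre_def
  by (metis append_eq_append_conv_if append_take_drop_id)

lemma len_morph_le: "(\<And>x. length (f x) \<le> K) \<Longrightarrow> length (morph f w) \<le> K * length w"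
  proof (induction w)
  case (Cons a w)
  have "length (f a) \<le> K" by (rule Cons.prems)
  with Cons.IH[OF Cons.prems] show ?case by simp
qed simp

lemma len_morph_eq: "(\<And>x. length (f x) = k) \<Longrightarrow> length (morph f w) = k * length w"
  by (induction w) auto

lemma len_morph_ge: "(\<And>x. f x \<noteq> []) \<Longrightarrow> length w \<le> length (morph f w)"
proof (induction w)
  case (Cons x w)
  then have "1 \<le> length (f x)" by (simp add: Suc_leI)
  with Cons show ?case by simp
qed simp

lemma succ_morph:
  assumes "\<And>x. successively R (f x)" "\<And>x. f x \<noteq> []"
    "\<And>x y. R x y \<Longrightarrow> R (last (f x)) (hd (f y))"
  shows "successively R w \<Longrightarrow> successively R (morph f w)"
proof (induction w rule: induct_list012)
  case 1 then show ?case by simp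
next
  case (2 x) then show ?case using assms(1) by simp
next
  case (3 x y zs)
  have "successively R (morph f (y # zs))" using 3 by simp
  moreover have "hd (morph f (y # zs)) = hd (f y)" using assms(2)[of y] by simp
  ultimately show ?case using 3 assms by (simp add: successively_append_iff)
qed

lemma telescope:
  assumes id: "\<And>x. u x @ morph t (s x) = morph s (s x) @ v x"
    and R: "\<And>x y. R x y \<Longrightarrow> v x = u y"
  shows "successively R w \<Longrightarrow> w \<noteq> [] \<Longrightarrow>
     u (hd w) @ morph t (morph s w) = morph s (morph s w) @ v (last w)"
proof (induction w rule: induct_list012)
  case (2 x) then show ?case using id[of x] by simp
next
  case (3 x y zs)
  have IH: "u y @ morph t (morph s (y # zs)) = morph s (morph s (y # zs)) @ v (last (y#zs))"
    using 3 by simp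
  have "u x @ morph t (morph s (x # y # zs))
      = (u x @ morph t (s x)) @ morph t (morph s (y # zs))" by simp
  also have "\<dots> = morph s (s x) @ (v x @ morph t (morph s (y # zs)))" using id[of x] by simp
  also have "\<dots> = morph s (s x) @ (u y @ morph t (morph s (y # zs)))"
    using R[of x y] "3.prems"(1) by (simp del: append_assoc)
  also have "\<dots> = morph s (morph s (x # y # zs)) @ v (last (x#y#zs))" using IH by simp
  finally show ?case by simp
qed simp

lemma generic:
  fixes s t :: "'a \<Rightarrow> 'a list"
  assumes slen: "\<And>x. length (s x) = k" and k2: "2 \<le> k"
    and tne: "\<And>x. t x \<noteq> []" and tlen: "\<And>x. length (t x) \<le> K"
    and sa0: "s a0 = a0 # xs" and ta0: "t a0 = a0 # ys" and ys: "ys \<noteq> []"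
    and ua0: "u a0 = []"
    and id: "\<And>x. u x @ morph t (s x) = morph s (s x) @ v x"
    and Rv: "\<And>x y. R x y \<Longrightarrow> v x = u y"
    and Rs: "\<And>x. successively R (s x)"
    and Rb: "\<And>x y. R x y \<Longrightarrow> R (last (s x)) (hd (s y))"
  shows "(\<exists>f. iter_fixpoint s a0 f) \<and> (\<forall>f. iter_fixpoint s a0 f \<longrightarrow> iter_fixpoint t a0 f)"
proof -
  define W where "W n = (morph s ^^ n) [a0]" for n
  have WS: "W (Suc n) = morph s (W n)" for n by (simp add: W_def)
  have sne: "s x \<noteq> []" for x using slen[of x] k2 by auto
  have Wlen: "length (W n) = k ^ n" for n
    by (induction n) (simp_all add: W_def len_morph_eq[OF slen])
  have Wpre1: "pre (W n) (W (Suc n))" for n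
  proof (induction n)
    case 0 show ?case by (simp add: W_def sa0 pre_def)
  next
    case (Suc n) then show ?case unfolding WS[of "Suc n"] WS[of n] by (rule pre_morph)
  qed
  have Wpre: "m \<le> n \<Longrightarrow> pre (W m) (W n)" for m n
  proof (induction n)
    case 0 then show ?case by (simp add: pre_def)
  next
    case (Suc n)
    show ?case
    proof (cases "m = Suc n")
      case True then show ?thesis by (simp add: pre_def)
    next
      case False then have "m \<le> n" using Suc.prems by simp
      then show ?thesis using pre_trans[OF Suc.IH Wpre1] by blast
    qed
  qed
  have Whd: "W n = a0 # tl (W n)" for n
  proof (induction n)
    case 0 show ?case by (simp add: W_def)
  next
    case (Suc n) then have "W (Suc n) = morph s (a0 # tl (W n))" using WS[of n] by metis
    then show ?case by (simp add: sa0)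
  qed
  have Wsucc: "successively R (W n)" for n
  proof (induction n)
    case 0 show ?case by (simp add: W_def)
  next
    case (Suc n) then show ?case unfolding WS using succ_morph[where f=s and R=R, OF Rs sne Rb] by blast
  qed
  have Wt: "\<exists>c. morph t (W (Suc n)) = W (Suc (Suc n)) @ c" for n
  proof -
    have "u (hd (W n)) @ morph t (morph s (W n)) = morph s (morph s (W n)) @ v (last (W n))"
    proof (rule telescope[OF id Rv Wsucc[of n]])
      show "W n \<noteq> []" using Whd[of n] by (metis list.distinct(1))
    qed
    moreover have "hd (W n) = a0" using Whd[of n] by (metis list.sel(1))
    ultimately show ?thesis using ua0 WS by auto
  qed
  have pow_gt: "n < k ^ n" for n
  proof -
    have "n < 2 ^ n" by (rule less_exp)
    also have "\<dots> \<le> k ^ n" using k2 by (simp add: power_mono)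
    finally show ?thesis .
  qed
  define f where "f n = W (Suc n) ! n" for n
  have Wconv: "\<forall>l\<ge>Suc n. n < length (W l) \<and> W l ! n = f n" for n
  proof (intro allI impI conjI)
    fix l assume l: "Suc n \<le> l"
    have "n < k ^ Suc n" using pow_gt[of "Suc n"] by simp
    then have ln: "n < length (W (Suc n))" using Wlen by simp
    then show "n < length (W l)" using pre_len[OF Wpre[OF l]] by simp
    show "W l ! n = f n" using pre_nth[OF Wpre[OF l] ln] f_def by simp
  qed
  have first_s: "\<exists>x. s a0 = a0 # x \<and> (\<forall>l. (morph s ^^ l) x \<noteq> [])"
  proof (intro exI conjI allI)
    show "s a0 = a0 # xs" by (rule sa0)
    fix l
    have "length ((morph s ^^ l) xs) = k ^ l * length xs"
      by (induction l) (simp_all add: len_morph_eq[OF slen])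
    moreover have "xs \<noteq> []" using slen[of a0] sa0 k2 by auto
    moreover have "0 < k ^ l" using k2 by simp
    ultimately show "(morph s ^^ l) xs \<noteq> []" by auto
  qed
  have fs: "iter_fixpoint s a0 f"
  proof -
    have "\<forall>n. \<exists>L. \<forall>l\<ge>L. n < length ((morph s ^^ l) [a0]) \<and> (morph s ^^ l) [a0] ! n = f n"
      using Wconv unfolding W_def by blast
    then show ?thesis unfolding iter_fixpoint_def using first_s by blast
  qed
  moreover have "iter_fixpoint t a0 g" if g: "iter_fixpoint s a0 g" for g
  proof -
    define X where "X n = (morph t ^^ n) [a0]" for n
    have XS: "X (Suc n) = morph t (X n)" for n by (simp add: X_def)
    have Xhd: "X n = a0 # tl (X n)" for n
    proof (induction n)
      case 0 show ?case by (simp add: X_def)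
    next
      case (Suc n) then have "X (Suc n) = morph t (a0 # tl (X n))" using XS[of n] by metis
      then show ?case by (simp add: ta0)
    qed
    have Xlen: "n < length (X n)" for n
    proof (induction n)
      case 0 show ?case by (simp add: X_def)
    next
      case (Suc n)
      have "X (Suc n) = t a0 @ morph t (tl (X n))" using XS[of n] Xhd[of n] by (metis morph_Cons)
      moreover have "length (tl (X n)) \<le> length (morph t (tl (X n)))" by (rule len_morph_ge[OF tne])
      moreover have "length (t a0) \<ge> 2" using ta0 ys by (cases ys) auto
      ultimately show ?case using Suc by simp
    qed
    have Xpre: "\<exists>m. pre (X n) (W m)" for n
    proof (induction n)
      case 0 show ?case by (rule exI[of _ 0]) (simp add: X_def W_def pre_def)
    next
      case (Suc n)
      then obtain m where m: "pre (X n) (W m)" by blast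
      define m' where "m' = m + K * length (X n)"
      have p: "pre (X n) (W m')" using pre_trans[OF m Wpre] m'_def by simp
      obtain c where c: "morph t (W (Suc m')) = W (Suc (Suc m')) @ c" using Wt by blast
      have "pre (X (Suc n)) (morph t (W (Suc m')))"
        unfolding XS by (rule pre_morph[OF pre_trans[OF p Wpre1]])
      then have pc: "pre (X (Suc n)) (W (Suc (Suc m')) @ c)" using c by simp
      have "length (X (Suc n)) \<le> K * length (X n)" unfolding XS by (rule len_morph_le[OF tlen])
      also have "\<dots> \<le> m'" using m'_def by simp
      also have "\<dots> \<le> k ^ Suc (Suc m')" using pow_gt[of "Suc (Suc m')"] by simp
      finally have "length (X (Suc n)) \<le> length (W (Suc (Suc m')))" using Wlen by simp
      then show ?case using pre_append_short[OF pc] by blast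
    qed
    have first_t: "\<exists>x. t a0 = a0 # x \<and> (\<forall>l. (morph t ^^ l) x \<noteq> [])"
    proof (intro exI conjI allI)
      show "t a0 = a0 # ys" by (rule ta0)
      fix l
      have "length ys \<le> length ((morph t ^^ l) ys)"
        by (induction l) (auto intro: order_trans len_morph_ge[OF tne])
      then show "(morph t ^^ l) ys \<noteq> []" using ys by auto
    qed
    have "\<forall>l\<ge>Suc n. n < length (X l) \<and> X l ! n = g n" for n
    proof (intro allI impI)
      fix l assume l: "Suc n \<le> l"
      have nl: "n < length (X l)" using Xlen[of l] l by simp
      obtain L where L: "\<forall>l\<ge>L. n < length (W l) \<and> W l ! n = g n"
        using g unfolding iter_fixpoint_def W_def[symmetric] by blast
      obtain m where m: "pre (X l) (W m)" using Xpre by blast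
      have p: "pre (X l) (W (max m L))" using pre_trans[OF m Wpre] by simp
      have "X l ! n = W (max m L) ! n" using pre_nth[OF p nl] by simp
      also have "\<dots> = g n" using L by simp
      finally show "n < length (X l) \<and> X l ! n = g n" using nl by simp
    qed
    then have "\<forall>n. \<exists>L. \<forall>l\<ge>L. n < length ((morph t ^^ l) [a0]) \<and> (morph t ^^ l) [a0] ! n = g n"
      unfolding X_def by blast
    then show ?thesis unfolding iter_fixpoint_def using first_t by blast
  qed
  ultimately show ?thesis by blast
qed


fun u1 :: "hl \<Rightarrow> hl list" where
  "u1 A = []" | "u1 Abar = []" | "u1 B = [B]" | "u1 Bbar = [B]" | "u1 C = [C]" | "u1 Cbar = [C]"
fun v1 :: "hl \<Rightarrow> hl list" where
  "v1 A = [C]" | "v1 Abar = [C]" | "v1 B = []" | "v1 Bbar = []" | "v1 C = [B]" | "v1 Cbar = [B]"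
fun u2 :: "ll \<Rightarrow> ll list" where
  "u2 LA = []" | "u2 LAbar = []" | "u2 LB = [LBbar]" | "u2 LBbar = [LBbar]"
fun v2 :: "ll \<Rightarrow> ll list" where
  "v2 LA = [LBbar]" | "v2 LAbar = [LBbar]" | "v2 LB = []" | "v2 LBbar = []"

lemma part1: "(\<exists>f. iter_fixpoint phi A f) \<and> (\<forall>f. iter_fixpoint phi A f \<longrightarrow> iter_fixpoint xi A f)"
proof (rule generic[where k=2 and K=3 and xs="[Cbar]" and ys="[Cbar,B]" and u=u1 and v=v1
      and R="\<lambda>x y. v1 x = u1 y"])
  fix x show "length (phi x) = 2" by (cases x) auto
  show "xi x \<noteq> []" by (cases x) auto
  show "length (xi x) \<le> 3" by (cases x) auto
  show "u1 x @ morph xi (phi x) = morph phi (phi x) @ v1 x" by (cases x) auto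
  show "successively (\<lambda>x y. v1 x = u1 y) (phi x)" by (cases x) auto
  fix y show "v1 x = u1 y \<Longrightarrow> v1 (last (phi x)) = u1 (hd (phi y))" by (cases x; cases y) auto
qed auto

lemma part2: "(\<exists>f. iter_fixpoint lam LA f) \<and> (\<forall>f. iter_fixpoint lam LA f \<longrightarrow> iter_fixpoint eta LA f)"
proof (rule generic[where k=3 and K=4 and xs="[LB,LA]" and ys="[LB,LA,LBbar]" and u=u2 and v=v2
      and R="\<lambda>x y. v2 x = u2 y"])
  fix x show "length (lam x) = 3" by (cases x) auto
  show "eta x \<noteq> []" by (cases x) auto
  show "length (eta x) \<le> 4" by (cases x) auto
  show "u2 x @ morph eta (lam x) = morph lam (lam x) @ v2 x" by (cases x) auto
  show "successively (\<lambda>x y. v2 x = u2 y) (lam x)" by (cases x) auto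
  fix y show "v2 x = u2 y \<Longrightarrow> v2 (last (lam x)) = u2 (hd (lam y))" by (cases x; cases y) auto
qed auto

lemma nu_xi: "non_uniform xi"
  unfolding non_uniform_def uniform_def
proof
  assume "\<exists>k. \<forall>x. length (xi x) = k"
  then obtain k where "\<forall>x. length (xi x) = k" by blast
  then have "length (xi A) = k" "length (xi B) = k" by blast+
  then show False by simp
qed

lemma nu_eta: "non_uniform eta"
  unfolding non_uniform_def uniform_def
proof
  assume "\<exists>k. \<forall>x. length (eta x) = k"
  then obtain k where "\<forall>x. length (eta x) = k" by blast
  then have "length (eta LA) = k" "length (eta LB) = k" by blast+
  then show False by simp
qed

theorem mainTheorem1:
  shows "(\<exists>s. iter_fixpoint phi A s)
       \<and> (\<forall>s. iter_fixpoint phi A s \<longrightarrow> iter_fixpoint xi A s)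
       \<and> non_uniform xi
       \<and> (\<forall>s. iter_fixpoint phi A s \<longrightarrow> nonuniformly_pure_morphic s)
       \<and> (\<exists>h. iter_fixpoint lam LA h)
       \<and> (\<forall>h. iter_fixpoint lam LA h \<longrightarrow> iter_fixpoint eta LA h)
       \<and> non_uniform eta
       \<and> (\<forall>h. iter_fixpoint lam LA h \<longrightarrow> nonuniformly_pure_morphic h)"
  using part1 part2 nu_xi nu_eta unfolding nonuniformly_pure_morphic_def by blast

end
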